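(* Let $k\ge 2$, let $B=M\cup\{\omega_1,\ldots,\omega_p\}$ with $p\ge 1$ and $\omega_1,\ldots,\omega_p\in P_k\setminus M$, and let $F$ be a finite system of functions from $P_k(n)$ (for some $n\ge 1$). Then $$d(F)\le (d(B)+1)^{I_B(F)}-1 .$$
   Context: Let $k\ge 2$ be an integer and $E_k=\{0,1,\ldots,k-1\}$. $P_k(n)$ denotes the set of all functions $E_k^n\to E_k$ ($k$-valued logic functions of $n$ arguments), and $P_k=\bigcup_n P_k(n)$. Tuples in $E_k^n$ are ordered componentwise: $\tilde\alpha\le\tilde\beta$ iff $\alpha_j\le\beta_j$ for all $j$. A function $f$ is monotone if $\tilde\alpha\le\tilde\beta$ implies $f(\tilde\alpha)\le f(\tilde\beta)$; $M$ is the set of all monotone functions in $P_k$ (of all arities, including constants). A basis is a set $B=M\cup\{\omega_1,\ldots,\omega_p\}$ with $p\ge1$ and $\omega_i\in P_k\setminus M$. A circuit over $B$ with inputs $x_1,\ldots,x_n$ is a finite directed acyclic graph whose source nodes are labelled by the variables $x_1,\ldots,x_n$ and each of whose other nodes (gates) is labelled by a $q$-ary function from $B$ and has $q$ ordered incoming edges; each node computes a function of $P_k(n)$ in the obvious way. A circuit realizes a system $F$ of functions of $x_1,\ldots,x_n$ if every function of $F$ is computed at some node. Gates labelled by functions of $M$ have weight $0$, gates labelled by some $\omega_i$ have weight $1$. The non-monotone complexity $I_B(S)$ of a circuit $S$ is the sum of the weights of its gates; $I_B(F)$ is the minimum of $I_B(S)$ over all circuits $S$ over $B$ realizing $F$,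 and $I_B(f)=I_B(\{f\})$. A chain is a sequence $\tilde\alpha_1,\ldots,\tilde\alpha_r$ of pairwise distinct tuples of $E_k^n$ with $\tilde\alpha_i\le\tilde\alpha_{i+1}$ for $i=1,\ldots,r-1$. A pair $(\tilde\alpha,\tilde\beta)$ with $\tilde\alpha\le\tilde\beta$ is a jump for a system $F$ if $f(\tilde\alpha)>f(\tilde\beta)$ for at least one $f\in F$. For a chain $C=(\tilde\alpha_1,\ldots,\tilde\alpha_r)$, the decrease $d_C(F)$ is the number of $i\in\{1,\ldots,r-1\}$ such that $(\tilde\alpha_i,\tilde\alpha_{i+1})$ is a jump for $F$. The decrease $d(F)$ is the maximum of $d_C(F)$ over all chains $C$ in $E_k^n$; $d(f)=d(\{f\})$. Finally $d(B)=\max\{d(\omega_1),\ldots,d(\omega_p)\}$. *)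

theory Defs
  imports Main
begin

text \<open>Tuples of E_k^n are lists of length n with entries < k; a k-valued
function of q arguments is a map nat list => nat whose values on E_k^q lie in E_k
(only its values on E_k^q matter).\<close>

definition Ek :: "nat \<Rightarrow> nat \<Rightarrow> nat list set" where
  "Ek k n = {xs. length xs = n \<and> (\<forall>a\<in>set xs. a < k)}"

definition tle :: "nat list \<Rightarrow> nat list \<Rightarrow> bool" where
  "tle a b \<longleftrightarrow> list_all2 (\<le>) a b"

definition Pk :: "nat \<Rightarrow> nat \<Rightarrow> (nat list \<Rightarrow> nat) set" where
  "Pk k q = {f. \<forall>x\<in>Ek k q. f x < k}"

definition monotone_k :: "nat \<Rightarrow> nat \<Rightarrow> (nat list \<Rightarrow> nat) \<Rightarrow> bool" where
  "monotone_k k q f \<longleftrightarrow> (\<forall>a\<in>Ek k q. \<forall>b\<in>Ek k q. tle a b \<longrightarrow> f a \<le> f b)"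

definition Mk :: "nat \<Rightarrow> nat \<Rightarrow> (nat list \<Rightarrow> nat) set" where
  "Mk k q = {f \<in> Pk k q. monotone_k k q f}"

text \<open>Circuits as topologically sorted straight-line programs.
 Nodes 0..n-1 are the inputs x_1..x_n, node n+j is gate j.
 A gate label is either a monotone function of arity q (weight 0), or
 the i-th non-monotone basis function omega_i (weight 1).
 The basis non-monotone part is a list ws of pairs (arity, function).\<close>

datatype glabel = Mono nat "nat list \<Rightarrow> nat" | Om nat

type_synonym gate = "glabel \<times> nat list"

fun gapply :: "(nat \<times> (nat list \<Rightarrow> nat)) list \<Rightarrow> glabel \<Rightarrow> nat list \<Rightarrow> nat" where
  "gapply ws (Mono q g) args = g args"
| "gapply ws (Om i) args = snd (ws ! i) args"

fun run :: "(nat \<times> (nat list \<Rightarrow> nat)) list \<Rightarrow> gate list \<Rightarrow> nat list \<Rightarrow> nat list" where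
  "run ws [] vs = vs"
| "run ws ((l, ins) # gs) vs = run ws gs (vs @ [gapply ws l (map (\<lambda>j. vs ! j) ins)])"

fun gate_ok :: "nat \<Rightarrow> (nat \<times> (nat list \<Rightarrow> nat)) list \<Rightarrow> nat \<Rightarrow> gate \<Rightarrow> bool" where
  "gate_ok k ws m (Mono q g, ins) \<longleftrightarrow> g \<in> Mk k q \<and> length ins = q \<and> (\<forall>j\<in>set ins. j < m)"
| "gate_ok k ws m (Om i, ins) \<longleftrightarrow> i < length ws \<and> length ins = fst (ws ! i) \<and> (\<forall>j\<in>set ins. j < m)"

definition circuit :: "nat \<Rightarrow> nat \<Rightarrow> (nat \<times> (nat list \<Rightarrow> nat)) list \<Rightarrow> gate list \<Rightarrow> bool" where
  "circuit k n ws gs \<longleftrightarrow> (\<forall>j < length gs. gate_ok k ws (n + j) (gs ! j))"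

definition realizes :: "nat \<Rightarrow> nat \<Rightarrow> (nat \<times> (nat list \<Rightarrow> nat)) list \<Rightarrow> gate list
    \<Rightarrow> (nat list \<Rightarrow> nat) set \<Rightarrow> bool" where
  "realizes k n ws gs F \<longleftrightarrow>
     (\<forall>f\<in>F. \<exists>v < n + length gs. \<forall>x\<in>Ek k n. run ws gs x ! v = f x)"

definition is_om :: "glabel \<Rightarrow> bool" where
  "is_om l \<longleftrightarrow> (case l of Om _ \<Rightarrow> True | Mono _ _ \<Rightarrow> False)"

definition weight :: "gate list \<Rightarrow> nat" where
  "weight gs = length (filter (\<lambda>g. is_om (fst g)) gs)"

definition IB :: "nat \<Rightarrow> nat \<Rightarrow> (nat \<times> (nat list \<Rightarrow> nat)) list \<Rightarrow> (nat list \<Rightarrow> nat) set \<Rightarrow> nat" where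
  "IB k n ws F = (LEAST w. \<exists>gs. circuit k n ws gs \<and> realizes k n ws gs F \<and> weight gs = w)"

definition is_chain :: "nat \<Rightarrow> nat \<Rightarrow> nat list list \<Rightarrow> bool" where
  "is_chain k n C \<longleftrightarrow> C \<noteq> [] \<and> set C \<subseteq> Ek k n \<and> distinct C \<and>
     (\<forall>i. Suc i < length C \<longrightarrow> tle (C ! i) (C ! Suc i))"

definition jump :: "(nat list \<Rightarrow> nat) set \<Rightarrow> nat list \<Rightarrow> nat list \<Rightarrow> bool" where
  "jump F a b \<longleftrightarrow> tle a b \<and> (\<exists>f\<in>F. f a > f b)"

definition decC :: "(nat list \<Rightarrow> nat) set \<Rightarrow> nat list list \<Rightarrow> nat" where
  "decC F C = card {i. Suc i < length C \<and> jump F (C ! i) (C ! Suc i)}"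

definition dec :: "nat \<Rightarrow> nat \<Rightarrow> (nat list \<Rightarrow> nat) set \<Rightarrow> nat" where
  "dec k n F = Max {decC F C | C. is_chain k n C}"

definition dB :: "nat \<Rightarrow> (nat \<times> (nat list \<Rightarrow> nat)) list \<Rightarrow> nat" where
  "dB k ws = Max ((\<lambda>w. dec k (fst w) {snd w}) ` set ws)"

end

theory Submission imports Defs begin

lemma run_append: "run ws (gs @ hs) vs = run ws hs (run ws gs vs)"
  by (induction ws gs vs rule: run.induct) auto

lemma length_run[simp]: "length (run ws gs vs) = length vs + length gs"
  by (induction ws gs vs rule: run.induct) auto

lemma run_snoc: "run ws (gs @ [(l,ins)]) vs = run ws gs vs @ [gapply ws l (map (\<lambda>j. run ws gs vs ! j) ins)]"
  by (simp add: run_append)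

lemma circuit_snoc: "circuit k n ws (gs @ [g]) \<longleftrightarrow> circuit k n ws gs \<and> gate_ok k ws (n + length gs) g"
  unfolding circuit_def
  by (auto simp: nth_append less_Suc_eq)

lemma gate_ok_mono: "gate_ok k ws m g \<Longrightarrow> m \<le> m' \<Longrightarrow> gate_ok k ws m' g"
  by (cases "(k,ws,m,g)" rule: gate_ok.cases) auto

lemma circuit_append: "circuit k n ws gs \<Longrightarrow> (\<forall>g\<in>set hs. gate_ok k ws (n + length gs) g) \<Longrightarrow> circuit k n ws (gs @ hs)"
  unfolding circuit_def
proof (intro allI impI)
  fix j assume c: "\<forall>j<length gs. gate_ok k ws (n + j) (gs ! j)" and h: "\<forall>g\<in>set hs. gate_ok k ws (n + length gs) g"
    and j: "j < length (gs @ hs)"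
  show "gate_ok k ws (n + j) ((gs @ hs) ! j)"
  proof (cases "j < length gs")
    case True thus ?thesis using c by (simp add: nth_append)
  next
    case False
    hence "hs ! (j - length gs) \<in> set hs" using j by simp
    hence "gate_ok k ws (n + length gs) (hs ! (j - length gs))" using h by blast
    thus ?thesis using False by (simp add: nth_append) (erule gate_ok_mono, simp)
  qed
qed

lemma tle_snoc: "length xs = length ys \<Longrightarrow> tle (xs@[a]) (ys@[b]) \<longleftrightarrow> tle xs ys \<and> a \<le> b"
  by (simp add: tle_def list_all2_append)

lemma tle_nth: "tle a b \<longleftrightarrow> length a = length b \<and> (\<forall>i<length a. a!i \<le> b!i)"
  by (simp add: tle_def list_all2_conv_all_nth)

lemma tle_refl[simp]: "tle a a" by (simp add: tle_nth)
lemma tle_trans: "tle a b \<Longrightarrow> tle b c \<Longrightarrow> tle a c" by (fastforce simp: tle_nth intro: order_trans)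
lemma tle_antisym: "tle a b \<Longrightarrow> tle b a \<Longrightarrow> a = b" by (auto simp: tle_nth intro!: nth_equalityI antisym)

lemma finite_Ek: "finite (Ek k n)"
proof -
  have "Ek k n \<subseteq> {xs. set xs \<subseteq> {..<k} \<and> length xs = n}" by (auto simp: Ek_def)
  thus ?thesis by (rule finite_subset) (simp add: finite_lists_length_eq)
qed

lemma tle_map: "tle a b \<Longrightarrow> \<forall>j\<in>set ins. j < length a \<Longrightarrow> tle (map (\<lambda>j. a!j) ins) (map (\<lambda>j. b!j) ins)"
  by (auto simp: tle_nth)

lemma run_bound:
  assumes "circuit k n ws gs" "x \<in> Ek k n" "\<forall>w\<in>set ws. snd w \<in> Pk k (fst w)"
  shows "\<forall>v\<in>set (run ws gs x). v < k"
  using assms(1)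
proof (induction gs rule: rev_induct)
  case Nil then show ?case using assms(2) by (simp add: Ek_def)
next
  case (snoc g gs)
  obtain l ins where g: "g = (l, ins)" by fastforce
  from snoc.prems have c: "circuit k n ws gs" and go: "gate_ok k ws (n + length gs) (l,ins)"
    by (auto simp: circuit_snoc g)
  have IH: "\<forall>v\<in>set (run ws gs x). v < k" using snoc.IH c by blast
  have len: "length (run ws gs x) = n + length gs" using assms(2) by (simp add: Ek_def)
  have new: "gapply ws l (map (\<lambda>j. run ws gs x ! j) ins) < k"
  proof (cases l)
    case (Mono q f)
    with go have "f \<in> Mk k q" "length ins = q" "\<forall>j\<in>set ins. j < n + length gs" by auto
    moreover have "map (\<lambda>j. run ws gs x ! j) ins \<in> Ek k q"
      using calculation IH len by (auto simp: Ek_def)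
    ultimately show ?thesis using Mono by (auto simp: Mk_def Pk_def)
  next
    case (Om i)
    with go have "i < length ws" "length ins = fst (ws!i)" "\<forall>j\<in>set ins. j < n + length gs" by auto
    moreover have "map (\<lambda>j. run ws gs x ! j) ins \<in> Ek k (fst (ws!i))"
      using calculation IH len by (auto simp: Ek_def)
    moreover have "snd (ws!i) \<in> Pk k (fst (ws!i))" using assms(3) calculation(1) by auto
    ultimately show ?thesis using Om by (auto simp: Pk_def)
  qed
  show ?case using IH new by (simp add: g run_snoc)
qed


lemma comb:
  fixes J K :: "nat set" and r d :: nat
  assumes "finite J" "J \<subseteq> {..<r}" "K \<subseteq> {..<r}" "K \<inter> J = {}"
    and "\<And>l m. l \<le> m \<Longrightarrow> m \<le> r \<Longrightarrow> {l..<m} \<inter> J = {} \<Longrightarrow> card (K \<inter> {l..<m}) \<le> d"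
  shows "card K \<le> d * (card J + 1)"
  using assms
proof (induction "card J" arbitrary: r J K)
  case 0
  hence "J = {}" by simp
  hence "card (K \<inter> {0..<r}) \<le> d" using 0 by auto
  moreover have "K \<inter> {0..<r} = K" using 0 by auto
  ultimately show ?case using \<open>J = {}\<close> by simp
next
  case (Suc N)
  have ne: "J \<noteq> {}" using Suc.hyps(2) by auto
  define j where "j = Max J"
  have jJ: "j \<in> J" using ne Suc.prems by (simp add: j_def)
  have jr: "j < r" using jJ Suc.prems by auto
  have jmax: "\<And>x. x \<in> J \<Longrightarrow> x \<le> j" using Suc.prems by (simp add: j_def)
  define J0 where "J0 = J - {j}"
  define K0 where "K0 = K \<inter> {..<j}"
  have cJ0: "N = card J0" using Suc.hyps(2) jJ Suc.prems(1) by (simp add: J0_def)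
  have J0sub: "J0 \<subseteq> {..<j}" using jmax by (force simp: J0_def)
  have "card K0 \<le> d * (card J0 + 1)"
  proof (rule Suc.hyps(1)[OF cJ0])
    show "finite J0" using Suc.prems by (simp add: J0_def)
    show "J0 \<subseteq> {..<j}" by (rule J0sub)
    show "K0 \<subseteq> {..<j}" by (auto simp: K0_def)
    show "K0 \<inter> J0 = {}" using Suc.prems by (auto simp: K0_def J0_def)
    fix l m assume lm: "l \<le> m" "m \<le> j" "{l..<m} \<inter> J0 = {}"
    hence "{l..<m} \<inter> J = {}" by (auto simp: J0_def)
    hence "card (K \<inter> {l..<m}) \<le> d" using Suc.prems(5)[of l m] lm jr by simp
    moreover have "K0 \<inter> {l..<m} = K \<inter> {l..<m}" using lm by (auto simp: K0_def)
    ultimately show "card (K0 \<inter> {l..<m}) \<le> d" by simp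
  qed
  moreover have "card (K \<inter> {Suc j..<r}) \<le> d"
    using Suc.prems(5)[of "Suc j" r] jr jmax by force
  moreover have "K \<subseteq> K0 \<union> (K \<inter> {Suc j..<r})"
  proof
    fix x assume x: "x \<in> K"
    hence "x < r" "x \<noteq> j" using Suc.prems(3,4) jJ by auto
    thus "x \<in> K0 \<union> (K \<inter> {Suc j..<r})" using x by (auto simp: K0_def)
  qed
  moreover have "card K \<le> card K0 + card (K \<inter> {Suc j..<r})"
    by (metis calculation(3) card_Un_le card_mono finite_Un finite_atLeastLessThan finite_Int finite_lessThan K0_def order_trans)
  moreover have "d * card J = d * card J0 + d" using cJ0 Suc.hyps(2) by (metis mult_Suc_right add.commute)
  ultimately show ?case by (simp add: algebra_simps)
qed

lemma decC_le: "decC F C \<le> length C"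
proof -
  have "{i. Suc i < length C \<and> jump F (C ! i) (C ! Suc i)} \<subseteq> {..<length C}" by auto
  thus ?thesis unfolding decC_def by (metis card_lessThan card_mono finite_lessThan)
qed

lemma dec_ge:
  assumes "is_chain k q C" shows "decC F C \<le> dec k q F"
proof -
  have "{decC F C | C. is_chain k q C} \<subseteq> {..card (Ek k q)}"
  proof
    fix x assume "x \<in> {decC F C | C. is_chain k q C}"
    then obtain D where D: "is_chain k q D" "x = decC F D" by blast
    have "length D = card (set D)" using D by (simp add: is_chain_def distinct_card)
    also have "\<dots> \<le> card (Ek k q)" using D by (intro card_mono finite_Ek) (auto simp: is_chain_def)
    finally show "x \<in> {..card (Ek k q)}" using decC_le[of F D] D by simp
  qed
  hence "finite {decC F C | C. is_chain k q C}" by (rule finite_subset) simp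
  thus ?thesis unfolding dec_def using assms by (intro Max_ge) auto
qed

lemma decC_snoc:
  assumes "C \<noteq> []"
  shows "decC F (C @ [y]) = decC F C + (if jump F (last C) y then 1 else 0)"
proof -
  have eq: "{i. Suc i < length (C@[y]) \<and> jump F ((C@[y]) ! i) ((C@[y]) ! Suc i)}
     = {i. Suc i < length C \<and> jump F (C ! i) (C ! Suc i)} \<union> (if jump F (last C) y then {length C - 1} else {})" (is "?L = ?R")
  proof (rule set_eqI)
    fix i
    show "i \<in> ?L \<longleftrightarrow> i \<in> ?R"
    proof (cases "Suc i < length C")
      case True thus ?thesis by (auto simp: nth_append)
    next
      case False
      show ?thesis
      proof (cases "i = length C - 1")
        case True
        hence "Suc i = length C" using assms by (cases C) auto
        thus ?thesis using True assms by (auto simp: nth_append last_conv_nth)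
      next
        case F2: False
        hence "\<not> Suc i < length (C@[y])" using False by auto
        thus ?thesis using F2 False by auto
      qed
    qed
  qed
  have fin: "finite {i. Suc i < length C \<and> jump F (C ! i) (C ! Suc i)}" by (rule finite_subset[of _ "{..<length C}"]) auto
  show ?thesis unfolding decC_def eq using fin assms by auto
qed


lemma interval_aux:
  assumes mono: "\<And>i. l \<le> i \<Longrightarrow> i < m \<Longrightarrow> tle (a i) (a (Suc i))"
    and inE: "\<And>i. l \<le> i \<Longrightarrow> i \<le> m \<Longrightarrow> a i \<in> Ek k q"
    and lm: "l \<le> m"
  shows "\<exists>C. is_chain k q C \<and> last C = a m \<and> (\<forall>x\<in>set C. tle x (a m)) \<and>
           card {i. l \<le> i \<and> i < m \<and> f (a i) > f (a (Suc i))} \<le> decC {f} C"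
  using lm
proof (induction m rule: dec_induct)
  case base
  have e: "{i. l \<le> i \<and> i < l \<and> f (a i) > f (a (Suc i))} = {}" by auto
  have "is_chain k q [a l]" using inE[of l] lm by (simp add: is_chain_def)
  thus ?case by (intro exI[of _ "[a l]"]) (simp add: e)
next
  case (step n)
  then obtain C where C: "is_chain k q C" "last C = a n" "\<forall>x\<in>set C. tle x (a n)"
    "card {i. l \<le> i \<and> i < n \<and> f (a i) > f (a (Suc i))} \<le> decC {f} C" by blast
  have tn: "tle (a n) (a (Suc n))" using mono step by simp
  have S: "{i. l \<le> i \<and> i < Suc n \<and> f (a i) > f (a (Suc i))} =
     {i. l \<le> i \<and> i < n \<and> f (a i) > f (a (Suc i))} \<union> (if f (a n) > f (a (Suc n)) then {n} else {})"
    using step by (auto simp: less_Suc_eq)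
  have fin: "finite {i. l \<le> i \<and> i < n \<and> f (a i) > f (a (Suc i))}" by (rule finite_subset[of _ "{..<n}"]) auto
  show ?case
  proof (cases "a (Suc n) = a n")
    case True
    hence "{i. l \<le> i \<and> i < Suc n \<and> f (a i) > f (a (Suc i))} = {i. l \<le> i \<and> i < n \<and> f (a i) > f (a (Suc i))}"
      using S by auto
    thus ?thesis using C True by (intro exI[of _ C]) auto
  next
    case False
    have Cne: "C \<noteq> []" using C by (simp add: is_chain_def)
    have notin: "a (Suc n) \<notin> set C"
    proof
      assume "a (Suc n) \<in> set C"
      hence "tle (a (Suc n)) (a n)" using C by blast
      thus False using tle_antisym[OF tn] False by simp
    qed
    have ch: "is_chain k q (C @ [a (Suc n)])"
      unfolding is_chain_def
    proof (intro conjI allI impI)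
      show "set (C @ [a (Suc n)]) \<subseteq> Ek k q" using C inE[of "Suc n"] step by (auto simp: is_chain_def)
      show "distinct (C @ [a (Suc n)])" using C notin by (simp add: is_chain_def)
      fix i assume i: "Suc i < length (C @ [a (Suc n)])"
      show "tle ((C @ [a (Suc n)]) ! i) ((C @ [a (Suc n)]) ! Suc i)"
      proof (cases "Suc i < length C")
        case True thus ?thesis using C i by (simp add: nth_append is_chain_def)
      next
        case False
        hence si: "Suc i = length C" using i by simp
        hence "i = length C - 1" by simp
        hence "C ! i = last C" using Cne by (simp add: last_conv_nth)
        thus ?thesis using C tn si by (simp add: nth_append)
      qed
    qed simp
    have dc: "decC {f} (C @ [a (Suc n)]) = decC {f} C + (if f (a n) > f (a (Suc n)) then 1 else 0)"
      using decC_snoc[OF Cne] C tn by (simp add: jump_def)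
    have "card {i. l \<le> i \<and> i < Suc n \<and> f (a i) > f (a (Suc i))} \<le> decC {f} (C @ [a (Suc n)])"
      unfolding S dc using C(4) fin by (auto simp: card_insert_if)
    moreover have "\<forall>x\<in>set (C @ [a (Suc n)]). tle x (a (Suc n))" using C tn tle_trans by auto
    ultimately show ?thesis using ch by (intro exI[of _ "C @ [a (Suc n)]"]) auto
  qed
qed

lemma interval:
  assumes "\<And>i. l \<le> i \<Longrightarrow> i < m \<Longrightarrow> tle (a i) (a (Suc i))"
    and "\<And>i. l \<le> i \<Longrightarrow> i \<le> m \<Longrightarrow> a i \<in> Ek k q"
    and "l \<le> m"
  shows "card {i. l \<le> i \<and> i < m \<and> f (a i) > f (a (Suc i))} \<le> dec k q {f}"
  using interval_aux[of l m a k q f, OF assms] dec_ge by (meson le_trans)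


lemma weight_snoc: "weight (gs @ [(l,ins)]) = weight gs + (if is_om l then 1 else 0)"
  by (simp add: weight_def)

lemma dec_le_dB: "w \<in> set ws \<Longrightarrow> dec k (fst w) {snd w} \<le> dB k ws"
  unfolding dB_def by (rule Max_ge) auto

lemma main_count:
  assumes ch: "is_chain k n C" and wsP: "\<forall>w\<in>set ws. snd w \<in> Pk k (fst w)"
    and c: "circuit k n ws gs"
  shows "card {i. Suc i < length C \<and> \<not> tle (run ws gs (C!i)) (run ws gs (C!Suc i))} + 1
           \<le> (dB k ws + 1) ^ weight gs"
  using c
proof (induction gs rule: rev_induct)
  case Nil
  have e: "{i. Suc i < length C \<and> \<not> tle (C!i) (C!Suc i)} = {}"
    using ch by (auto simp: is_chain_def)
  show ?case by (simp add: weight_def e)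
next
  case (snoc g gs)
  obtain l ins where g: "g = (l, ins)" by fastforce
  from snoc.prems have c: "circuit k n ws gs" and go: "gate_ok k ws (n + length gs) (l,ins)"
    by (auto simp: circuit_snoc g)
  define d where "d = dB k ws"
  define V where "V i = run ws gs (C!i)" for i
  define J where "J = {i. Suc i < length C \<and> \<not> tle (V i) (V (Suc i))}"
  define J' where "J' = {i. Suc i < length C \<and> \<not> tle (run ws (gs@[g]) (C!i)) (run ws (gs@[g]) (C!Suc i))}"
  define A where "A i = map (\<lambda>j. V i ! j) ins" for i
  have IH: "card J + 1 \<le> (d + 1) ^ weight gs" using snoc.IH c by (simp add: J_def V_def d_def)
  have CE: "\<And>i. i < length C \<Longrightarrow> C!i \<in> Ek k n" using ch by (auto simp: is_chain_def)
  have lenV: "\<And>i. i < length C \<Longrightarrow> length (V i) = n + length gs" using CE by (simp add: V_def Ek_def)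
  have bndV: "\<And>i v. i < length C \<Longrightarrow> v \<in> set (V i) \<Longrightarrow> v < k"
    using run_bound[OF c CE wsP] by (simp add: V_def)
  have insb: "\<forall>j\<in>set ins. j < n + length gs" using go by (cases l) auto
  have new: "\<And>i. run ws (gs@[g]) (C!i) = V i @ [gapply ws l (A i)]"
    by (simp add: g run_snoc V_def A_def)
  have Atle: "\<And>i. Suc i < length C \<Longrightarrow> i \<notin> J \<Longrightarrow> tle (A i) (A (Suc i))"
    unfolding A_def J_def using insb lenV by (intro tle_map) auto
  have AE: "\<And>i. i < length C \<Longrightarrow> A i \<in> Ek k (length ins)"
    unfolding A_def Ek_def using insb lenV bndV by (auto intro!: bndV)
  have finJ: "finite J" by (rule finite_subset[of _ "{..<length C}"]) (auto simp: J_def)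
  have lenC: "Suc (length C - 1) = length C" using ch by (cases C) (auto simp: is_chain_def)
  show ?case
  proof (cases l)
    case (Mono q f)
    with go have fM: "f \<in> Mk k q" and lq: "length ins = q" by auto
    have "J' \<subseteq> J"
    proof
      fix i assume i: "i \<in> J'"
      show "i \<in> J"
      proof (rule ccontr)
        assume "i \<notin> J"
        hence t: "tle (V i) (V (Suc i))" and si: "Suc i < length C" using i by (auto simp: J_def J'_def)
        have "f (A i) \<le> f (A (Suc i))" using fM Atle[OF si \<open>i \<notin> J\<close>] AE[of i] AE[OF si] si lq
          by (auto simp: Mk_def monotone_k_def)
        hence "tle (run ws (gs@[g]) (C!i)) (run ws (gs@[g]) (C!Suc i))"
          using t lenV[of i] lenV[OF si] si by (simp add: new Mono tle_snoc)
        thus False using i by (simp add: J'_def)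
      qed
    qed
    hence "card J' \<le> card J" using finJ by (rule card_mono[rotated])
    hence "card J' + 1 \<le> (d+1) ^ weight (gs@[g])" using IH by (simp add: g weight_snoc Mono is_om_def)
    thus ?thesis unfolding J'_def d_def .
  next
    case (Om i0)
    with go have i0: "i0 < length ws" and lq: "length ins = fst (ws!i0)" by auto
    define \<omega> where "\<omega> = snd (ws!i0)"
    define K where "K = {i. Suc i < length C \<and> i \<notin> J \<and> \<omega> (A i) > \<omega> (A (Suc i))}"
    have "J' \<subseteq> J \<union> K"
    proof
      fix i assume i: "i \<in> J'"
      show "i \<in> J \<union> K"
      proof (rule ccontr)
        assume "i \<notin> J \<union> K"
        hence t: "tle (V i) (V (Suc i))" and si: "Suc i < length C" and "\<not> \<omega> (A i) > \<omega> (A (Suc i))"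
          using i by (auto simp: J_def J'_def K_def)
        hence "tle (run ws (gs@[g]) (C!i)) (run ws (gs@[g]) (C!Suc i))"
          using t lenV[of i] lenV[OF si] si by (simp add: new Om tle_snoc \<omega>_def)
        thus False using i by (simp add: J'_def)
      qed
    qed
    moreover have "finite K" by (rule finite_subset[of _ "{..<length C}"]) (auto simp: K_def)
    ultimately have "card J' \<le> card (J \<union> K)" using finJ by (intro card_mono) auto
    hence c1: "card J' \<le> card J + card K" using card_Un_le[of J K] by linarith
    have c2: "card K \<le> d * (card J + 1)"
    proof (rule comb[OF finJ])
      show "J \<subseteq> {..<length C - 1}" using lenC by (auto simp: J_def)
      show "K \<subseteq> {..<length C - 1}" using lenC by (auto simp: K_def)
      show "K \<inter> J = {}" by (auto simp: K_def)
      fix l' m assume lm: "l' \<le> m" "m \<le> length C - 1" "{l'..<m} \<inter> J = {}"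
      have "K \<inter> {l'..<m} = {i. l' \<le> i \<and> i < m \<and> \<omega> (A i) > \<omega> (A (Suc i))}"
        using lm lenC by (auto simp: K_def)
      also have "card \<dots> \<le> dec k (length ins) {\<omega>}"
      proof (rule interval[OF _ _ lm(1)])
        fix i assume "l' \<le> i" "i < m"
        thus "tle (A i) (A (Suc i))" using lm lenC by (intro Atle) auto
      next
        fix i assume "l' \<le> i" "i \<le> m"
        thus "A i \<in> Ek k (length ins)" using lm lenC by (intro AE) auto
      qed
      also have "\<dots> \<le> d" unfolding d_def \<omega>_def lq using i0 by (intro dec_le_dB) simp
      finally show "card (K \<inter> {l'..<m}) \<le> d" .
    qed
    have "card J' + 1 \<le> (d + 1) * (card J + 1)" using c1 c2 by (simp add: algebra_simps)
    also have "\<dots> \<le> (d + 1) * (d + 1) ^ weight gs" using IH by (rule mult_le_mono2)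
    finally have "card J' + 1 \<le> (d+1) ^ weight (gs@[g])" by (simp add: g weight_snoc Om is_om_def)
    thus ?thesis unfolding J'_def d_def .
  qed
qed


lemma run_layer:
  "\<forall>g\<in>set gs. \<forall>j\<in>set (snd g). j < length vs \<Longrightarrow>
   run ws gs vs = vs @ map (\<lambda>g. gapply ws (fst g) (map (\<lambda>j. vs ! j) (snd g))) gs"
proof (induction gs arbitrary: vs)
  case Nil thus ?case by simp
next
  case (Cons g gs)
  obtain l ins where g: "g = (l, ins)" by fastforce
  let ?x = "gapply ws l (map (\<lambda>j. vs ! j) ins)"
  have "run ws (g # gs) vs = run ws gs (vs @ [?x])" by (simp add: g)
  also have "\<dots> = (vs @ [?x]) @ map (\<lambda>g. gapply ws (fst g) (map (\<lambda>j. (vs @ [?x]) ! j) (snd g))) gs"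
    using Cons.prems by (intro Cons.IH) (fastforce simp: less_Suc_eq)
  also have "map (\<lambda>g. gapply ws (fst g) (map (\<lambda>j. (vs @ [?x]) ! j) (snd g))) gs
      = map (\<lambda>g. gapply ws (fst g) (map (\<lambda>j. vs ! j) (snd g))) gs"
  proof (rule map_cong[OF refl])
    fix h assume "h \<in> set gs"
    hence "\<forall>j\<in>set (snd h). j < length vs" using Cons.prems by auto
    hence "map (\<lambda>j. (vs @ [?x]) ! j) (snd h) = map (\<lambda>j. vs ! j) (snd h)"
      by (intro map_cong[OF refl]) (simp add: nth_append)
    thus "gapply ws (fst h) (map (\<lambda>j. (vs @ [?x]) ! j) (snd h)) = gapply ws (fst h) (map (\<lambda>j. vs ! j) (snd h))"
      by (rule arg_cong[where f="gapply ws (fst h)"])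
  qed
  finally show ?case by (simp add: g)
qed

lemma divmod_aux1: "c < (k::nat) \<Longrightarrow> (j * k + c) div k = j \<and> (j * k + c) mod k = c"
  by auto

lemma divmod_aux2: "t < (q::nat) \<Longrightarrow> (e * q + t) div q = e \<and> (e * q + t) mod q = t"
  by auto

lemma lt_mult_aux: "e < (N::nat) \<Longrightarrow> t < q \<Longrightarrow> e * q + t < N * q"
proof -
  assume "e < N" "t < q"
  hence "e * q + t < e * q + q" by simp
  also have "\<dots> = Suc e * q" by simp
  also have "\<dots> \<le> N * q" using \<open>e < N\<close> by (intro mult_le_mono1) simp
  finally show ?thesis .
qed


lemma lt_mult_aux2: "e < (N::nat) \<Longrightarrow> n + e*q \<le> j \<Longrightarrow> j < q + (n + e*q) \<Longrightarrow> j < n + N*q"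
  using lt_mult_aux[of e N "j - (n + e*q)" q] by linarith

lemma exists_circuit:
  assumes k2: "k \<ge> 2" and wsne: "ws \<noteq> []"
    and wsP: "\<forall>w\<in>set ws. snd w \<in> Pk k (fst w) \<and> \<not> monotone_k k (fst w) (snd w)"
    and fin: "finite F" and FP: "F \<subseteq> Pk k n"
  shows "\<exists>gs. circuit k n ws gs \<and> realizes k n ws gs F"
proof -
  define q where "q = fst (ws!0)"
  define \<omega> where "\<omega> = snd (ws!0)"
  have w0: "ws!0 \<in> set ws" using wsne by simp
  hence "\<not> monotone_k k q \<omega>" using wsP by (simp add: q_def \<omega>_def)
  then obtain a b where ab: "a \<in> Ek k q" "b \<in> Ek k q" "tle a b" "\<omega> a > \<omega> b"
    unfolding monotone_k_def by (auto simp: not_le)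
  have la: "length a = q" and lb: "length b = q" using ab by (auto simp: Ek_def)
  have qpos: "q > 0"
  proof (rule ccontr)
    assume "\<not> q > 0" hence "a = []" "b = []" using la lb by auto
    thus False using ab by simp
  qed
  have kpos: "k > 0" using k2 by simp
  define N where "N = n * k"
  define sel where "sel p = (\<lambda>ys::nat list. if ys!0 \<le> p div q mod k then a!(p mod q) else b!(p mod q))" for p
  define L1 where "L1 = map (\<lambda>p. (Mono 1 (sel p), [p div q div k])) [0..<N*q]"
  define L2 where "L2 = map (\<lambda>e. (Om 0, map (\<lambda>t. n + e*q + t) [0..<q])) [0..<N]"
  define psi where "psi e y = \<omega> (if y!(e div k) \<le> e mod k then a else b)" for e y
  define enc where "enc y = y @ map (\<lambda>e. psi e y) [0..<N]" for y
  define G where "G f z = Max (insert 0 (f ` {y\<in>Ek k n. tle (enc y) z}))" for f :: "nat list \<Rightarrow> nat" and z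
  define ins3 where "ins3 = [0..<n] @ map (\<lambda>e. n + N*q + e) [0..<N]"
  obtain fl where fl: "set fl = F" using finite_list[OF fin] by blast
  define L3 where "L3 = map (\<lambda>f. (Mono (n+N) (G f), ins3)) fl"

  have pdiv: "\<And>p. p < N*q \<Longrightarrow> p div q div k < n"
  proof -
    fix p assume "p < N*q"
    hence "p div q < N" using qpos by (simp add: less_mult_imp_div_less)
    thus "p div q div k < n" unfolding N_def by (simp add: less_mult_imp_div_less)
  qed

  have enc_inj: "\<And>x y. x \<in> Ek k n \<Longrightarrow> y \<in> Ek k n \<Longrightarrow> tle (enc y) (enc x) \<Longrightarrow> y = x"
  proof -
    fix x y assume x: "x \<in> Ek k n" and y: "y \<in> Ek k n" and t: "tle (enc y) (enc x)"
    have lx: "length x = n" and ly: "length y = n" using x y by (auto simp: Ek_def)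
    have t1: "tle y x" and t2: "tle (map (\<lambda>e. psi e y) [0..<N]) (map (\<lambda>e. psi e x) [0..<N])"
      using t lx ly by (auto simp: enc_def tle_def list_all2_append)
    show "y = x"
    proof (rule ccontr)
      assume "y \<noteq> x"
      then obtain j where j: "j < n" "y!j \<noteq> x!j" using lx ly by (metis nth_equalityI)
      hence lt: "y!j < x!j" using t1 lx ly by (auto simp: tle_nth)
      define c where "c = y!j"
      have ck: "c < k" using y j by (auto simp: Ek_def c_def)
      define e where "e = j*k + c"
      have ed: "e div k = j" "e mod k = c" using divmod_aux1[OF ck] by (auto simp: e_def)
      have "e < N"
      proof -
        have "e < j*k + k" using ck by (simp add: e_def)
        also have "\<dots> = Suc j * k" by simp
        also have "\<dots> \<le> n * k" using j by (intro mult_le_mono1) simp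
        finally show ?thesis by (simp add: N_def)
      qed
      hence "psi e y \<le> psi e x" using t2 by (auto simp: tle_nth)
      moreover have "psi e y = \<omega> a" using ed by (simp add: psi_def c_def)
      moreover have "psi e x = \<omega> b" using ed lt by (simp add: psi_def c_def)
      ultimately show False using ab by simp
    qed
  qed

  have Gval: "\<And>f x. f \<in> F \<Longrightarrow> x \<in> Ek k n \<Longrightarrow> G f (enc x) = f x"
  proof -
    fix f x assume "f \<in> F" "x \<in> Ek k n"
    hence "{y\<in>Ek k n. tle (enc y) (enc x)} = {x}" using enc_inj by auto
    thus "G f (enc x) = f x" by (simp add: G_def)
  qed

  have GM: "\<And>f. f \<in> F \<Longrightarrow> G f \<in> Mk k (n+N)"
  proof -
    fix f assume fF: "f \<in> F"
    have finS: "\<And>z. finite (f ` {y\<in>Ek k n. tle (enc y) z})" using finite_Ek by simp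
    have "\<And>z. G f z < k"
    proof -
      fix z
      have "\<forall>v \<in> insert 0 (f ` {y\<in>Ek k n. tle (enc y) z}). v < k"
        using fF FP kpos by (auto simp: Pk_def)
      thus "G f z < k" unfolding G_def using finS by (subst Max_less_iff) auto
    qed
    moreover have "\<And>z z'. tle z z' \<Longrightarrow> G f z \<le> G f z'"
    proof -
      fix z z' assume "tle z z'"
      hence "insert 0 (f ` {y\<in>Ek k n. tle (enc y) z}) \<subseteq> insert 0 (f ` {y\<in>Ek k n. tle (enc y) z'})"
        using tle_trans by blast
      thus "G f z \<le> G f z'" unfolding G_def using finS by (intro Max_mono) auto
    qed
    ultimately show "G f \<in> Mk k (n+N)" by (auto simp: Mk_def Pk_def monotone_k_def)
  qed

  have selM: "\<And>p. sel p \<in> Mk k 1"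
  proof -
    fix p
    have pq: "p mod q < q" using qpos by simp
    have "a!(p mod q) < k" "b!(p mod q) < k" using ab pq la lb by (auto simp: Ek_def)
    moreover have "a!(p mod q) \<le> b!(p mod q)" using ab(3) pq la by (auto simp: tle_nth)
    moreover have "\<And>y y'. tle y y' \<Longrightarrow> length y = 1 \<Longrightarrow> y!0 \<le> y'!0" by (auto simp: tle_nth)
    ultimately show "sel p \<in> Mk k 1"
      unfolding Mk_def Pk_def monotone_k_def sel_def Ek_def
      by (auto simp: Let_def) (meson le_trans)+
  qed

  define gs where "gs = L1 @ L2 @ L3"
  have lenL1: "length L1 = N*q" and lenL2: "length L2 = N" and lenL3: "length L3 = length fl"
    by (simp_all add: L1_def L2_def L3_def)

  have circ: "circuit k n ws gs"
  proof -
    have c1: "circuit k n ws L1"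
      using circuit_append[of k n ws "[]" L1] pdiv selM
      by (auto simp: circuit_def L1_def)
    have c2: "circuit k n ws (L1 @ L2)"
    proof (rule circuit_append[OF c1], rule ballI)
      fix g assume "g \<in> set L2"
      then obtain e where e: "e < N" "g = (Om 0, map (\<lambda>t. n + e*q + t) [0..<q])" by (auto simp: L2_def)
      have "\<forall>t<q. n + e*q + t < n + length L1" using e lt_mult_aux lenL1 by simp
      hence "\<forall>j. n + e*q \<le> j \<and> j < q + (n + e*q) \<longrightarrow> j < n + length L1"
      proof (intro allI impI)
        fix j assume "n + e*q \<le> j \<and> j < q + (n + e*q)"
        hence j1: "n + e*q \<le> j" "j < q + (n + e*q)" by auto
        hence "j - (n + e*q) < q" by linarith
        hence "n + e*q + (j - (n + e*q)) < n + length L1" using \<open>\<forall>t<q. n + e*q + t < n + length L1\<close> by blast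
        thus "j < n + length L1" using j1 by linarith
      qed
      thus "gate_ok k ws (n + length L1) g" using e wsne by (auto simp: q_def)
    qed
    show ?thesis unfolding gs_def
    proof (subst append_assoc[symmetric], rule circuit_append[OF c2], rule ballI)
      fix g assume "g \<in> set L3"
      then obtain f where f: "f \<in> F" "g = (Mono (n+N) (G f), ins3)" by (auto simp: L3_def fl)
      have "\<forall>j\<in>set ins3. j < n + length (L1@L2)" using lenL1 lenL2 by (auto simp: ins3_def)
      moreover have "length ins3 = n + N" by (simp add: ins3_def)
      ultimately show "gate_ok k ws (n + length (L1@L2)) g" using f GM by auto
    qed
  qed

  have realz: "realizes k n ws gs F"
    unfolding realizes_def
  proof
    fix f assume fF: "f \<in> F"
    then obtain idx where idx: "idx < length fl" "fl ! idx = f" using fl by (metis in_set_conv_nth)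
    define v where "v = n + N*q + N + idx"
    have "v < n + length gs" using idx by (simp add: v_def gs_def lenL1 lenL2 lenL3)
    moreover have "\<forall>x\<in>Ek k n. run ws gs x ! v = f x"
    proof
      fix x assume x: "x \<in> Ek k n"
      have lx: "length x = n" using x by (simp add: Ek_def)
      define v1 where "v1 = x @ map (\<lambda>p. sel p [x ! (p div q div k)]) [0..<N*q]"
      have r1: "run ws L1 x = v1"
        unfolding v1_def using pdiv lx by (subst run_layer) (auto simp: L1_def)
      have lv1: "length v1 = n + N*q" using lx by (simp add: v1_def)
      have v1e: "\<And>e. e < N \<Longrightarrow> map (\<lambda>j. v1 ! j) (map (\<lambda>t. n + e*q + t) [0..<q]) = (if x!(e div k) \<le> e mod k then a else b)"
      proof -
        fix e assume e: "e < N"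
        show "map (\<lambda>j. v1 ! j) (map (\<lambda>t. n + e*q + t) [0..<q]) = (if x!(e div k) \<le> e mod k then a else b)"
        proof (rule nth_equalityI)
          show "length (map (\<lambda>j. v1 ! j) (map (\<lambda>t. n + e*q + t) [0..<q])) = length (if x!(e div k) \<le> e mod k then a else b)"
            using la lb by simp
          fix t assume "t < length (map (\<lambda>j. v1 ! j) (map (\<lambda>t. n + e*q + t) [0..<q]))"
          hence t: "t < q" by simp
          have p: "e*q + t < N*q" using lt_mult_aux[OF e t] .
          have "v1 ! (n + e*q + t) = sel (e*q+t) [x ! ((e*q+t) div q div k)]"
            using p lx by (simp add: v1_def nth_append add.assoc)
          also have "\<dots> = (if x!(e div k) \<le> e mod k then a!t else b!t)"
            using divmod_aux2[OF t] by (simp add: sel_def)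
          finally show "map (\<lambda>j. v1 ! j) (map (\<lambda>t. n + e*q + t) [0..<q]) ! t = (if x!(e div k) \<le> e mod k then a else b) ! t"
            using t by simp
        qed
      qed
      define v2 where "v2 = v1 @ map (\<lambda>e. psi e x) [0..<N]"
      have r2: "run ws L2 v1 = v2"
      proof -
        have "\<forall>g\<in>set L2. \<forall>j\<in>set (snd g). j < length v1"
          using lv1 lt_mult_aux2 by (auto simp: L2_def)
        hence "run ws L2 v1 = v1 @ map (\<lambda>g. gapply ws (fst g) (map (\<lambda>j. v1 ! j) (snd g))) L2"
          by (rule run_layer)
        also have "map (\<lambda>g. gapply ws (fst g) (map (\<lambda>j. v1 ! j) (snd g))) L2 = map (\<lambda>e. psi e x) [0..<N]"
          unfolding L2_def using v1e by (auto simp: psi_def \<omega>_def)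
        finally show ?thesis by (simp add: v2_def)
      qed
      have lv2: "length v2 = n + N*q + N" using lv1 by (simp add: v2_def)
      have encx: "map (\<lambda>j. v2 ! j) ins3 = enc x"
      proof -
        have "map (\<lambda>j. v2 ! j) [0..<n] = x"
          using lx by (intro nth_equalityI) (auto simp: v2_def v1_def nth_append)
        moreover have "map (\<lambda>j. v2 ! j) (map (\<lambda>e. n + N*q + e) [0..<N]) = map (\<lambda>e. psi e x) [0..<N]"
          using lv1 by (intro nth_equalityI) (auto simp: v2_def nth_append)
        ultimately show ?thesis by (simp add: ins3_def enc_def)
      qed
      have r3: "run ws L3 v2 = v2 @ map (\<lambda>f. G f (enc x)) fl"
      proof -
        have "\<forall>g\<in>set L3. \<forall>j\<in>set (snd g). j < length v2"
          using lv2 by (auto simp: L3_def ins3_def)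
        hence "run ws L3 v2 = v2 @ map (\<lambda>g. gapply ws (fst g) (map (\<lambda>j. v2 ! j) (snd g))) L3"
          by (rule run_layer)
        thus ?thesis using encx by (simp add: L3_def comp_def)
      qed
      have "run ws gs x = v2 @ map (\<lambda>f. G f (enc x)) fl"
        by (simp add: gs_def run_append r1 r2 r3)
      hence "run ws gs x ! v = G f (enc x)" using idx lv2 by (simp add: v_def nth_append)
      thus "run ws gs x ! v = f x" using Gval[OF fF x] by simp
    qed
    ultimately show "\<exists>v < n + length gs. \<forall>x\<in>Ek k n. run ws gs x ! v = f x" by blast
  qed
  show ?thesis using circ realz by blast
qed


lemma finite_decs: "finite {decC F C | C. is_chain k q C}"
proof -
  have "{decC F C | C. is_chain k q C} \<subseteq> {..card (Ek k q)}"
  proof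
    fix x assume "x \<in> {decC F C | C. is_chain k q C}"
    then obtain D where D: "is_chain k q D" "x = decC F D" by blast
    have "length D = card (set D)" using D by (simp add: is_chain_def distinct_card)
    also have "\<dots> \<le> card (Ek k q)" using D by (intro card_mono finite_Ek) (auto simp: is_chain_def)
    finally show "x \<in> {..card (Ek k q)}" using decC_le[of F D] D by simp
  qed
  thus ?thesis by (rule finite_subset) simp
qed

theorem lemma1:
  fixes k n :: nat and ws :: "(nat \<times> (nat list \<Rightarrow> nat)) list"
    and F :: "(nat list \<Rightarrow> nat) set"
  assumes "k \<ge> 2"
    and "ws \<noteq> []"
    and "\<forall>w\<in>set ws. snd w \<in> Pk k (fst w) \<and> \<not> monotone_k k (fst w) (snd w)"
    and "n \<ge> 1"
    and "finite F"
    and "F \<subseteq> Pk k n"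
  shows "dec k n F \<le> (dB k ws + 1) ^ IB k n ws F - 1"
proof -
  have ex: "\<exists>w gs. circuit k n ws gs \<and> realizes k n ws gs F \<and> weight gs = w"
    using exists_circuit[OF assms(1,2,3,5,6)] by blast
  have "\<exists>gs. circuit k n ws gs \<and> realizes k n ws gs F \<and> weight gs = IB k n ws F"
    unfolding IB_def using ex by (rule LeastI_ex)
  then obtain gs where gs: "circuit k n ws gs" "realizes k n ws gs F" "weight gs = IB k n ws F" by blast
  have wsP: "\<forall>w\<in>set ws. snd w \<in> Pk k (fst w)" using assms(3) by blast
  have bound: "\<And>C. is_chain k n C \<Longrightarrow> decC F C \<le> (dB k ws + 1) ^ IB k n ws F - 1"
  proof -
    fix C assume ch: "is_chain k n C"
    define J where "J = {i. Suc i < length C \<and> \<not> tle (run ws gs (C!i)) (run ws gs (C!Suc i))}"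
    have mc: "card J + 1 \<le> (dB k ws + 1) ^ weight gs"
      unfolding J_def by (rule main_count[OF ch wsP gs(1)])
    have finJ: "finite J" by (rule finite_subset[of _ "{..<length C}"]) (auto simp: J_def)
    have "{i. Suc i < length C \<and> jump F (C ! i) (C ! Suc i)} \<subseteq> J"
    proof
      fix i assume i: "i \<in> {i. Suc i < length C \<and> jump F (C ! i) (C ! Suc i)}"
      then obtain f where f: "f \<in> F" "f (C!i) > f (C!Suc i)" and si: "Suc i < length C"
        by (auto simp: jump_def)
      obtain v where v: "v < n + length gs" "\<forall>x\<in>Ek k n. run ws gs x ! v = f x"
        using gs(2) f(1) by (auto simp: realizes_def)
      have CE: "C!i \<in> Ek k n" "C!Suc i \<in> Ek k n" using ch si by (auto simp: is_chain_def)
      have "run ws gs (C!i) ! v > run ws gs (C!Suc i) ! v" using v CE f by simp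
      moreover have "length (run ws gs (C!i)) = n + length gs" using CE by (simp add: Ek_def)
      ultimately have "\<not> tle (run ws gs (C!i)) (run ws gs (C!Suc i))" using v(1)
        by (auto simp: tle_nth)
      thus "i \<in> J" using si by (simp add: J_def)
    qed
    hence "decC F C \<le> card J" unfolding decC_def using finJ by (rule card_mono[rotated])
    moreover have "card J + 1 \<le> (dB k ws + 1) ^ IB k n ws F" using mc gs(3) by simp
    ultimately show "decC F C \<le> (dB k ws + 1) ^ IB k n ws F - 1" by linarith
  qed
  have ne: "{decC F C | C. is_chain k n C} \<noteq> {}"
  proof -
    have "is_chain k n [replicate n 0]" using assms(1) by (auto simp: is_chain_def Ek_def)
    thus ?thesis by blast
  qed
  show ?thesis unfolding dec_def using finite_decs ne bound
    by (subst Max_le_iff) auto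
qed

end
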